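(* Let $g_n\in\mathscr{A}_3(\Pi)$ ($n\ge1$) and $g\in\mathscr{A}_3(\Pi)$, with $(g_n)$ uniformly bounded. If $L(g_n/g)\to0$ and $V(g_n/g)\to0$, then $L(g_n)\to L(g)$ and $V(g_n)\to V(g)$.
   Context: $E$ is a locally compact complete separable metric space with $\sigma$-finite Borel measure $\mu$; $\Pi$ is a locally trace class orthogonal projection on $L^2(E,\mu)$ with kernel $\Pi(x,y)$. For Borel $f$, $L(f)=\int_E|f(x)-1|^3\Pi(x,x)d\mu(x)$ and $V(f)=\iint_{E^2}|f(x)-f(y)|^2|\Pi(x,y)|^2d\mu(x)d\mu(y)$. $\mathscr{A}_3(\Pi)$ is the set of positive Borel $g$ with $0<\inf g\le\sup g<\infty$, $L(g)<\infty$, $V(g)<\infty$, and for which some exhausting sequence of bounded sets $(E_n)$ satisfies $\lim_n\iint\chi_{E_n^c}(x)\chi_{E_n}(y)|g(x)-1|^2|\Pi(x,y)|^2d\mu(x)d\mu(y)=0$. *)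

theory Defs
  imports "HOL-Analysis.Analysis"
begin

definition square_int :: "'a measure \<Rightarrow> ('a \<Rightarrow> complex) \<Rightarrow> bool" where
  "square_int M f \<longleftrightarrow> f \<in> borel_measurable M \<and> integrable M (\<lambda>x. (cmod (f x))\<^sup>2)"

definition kernel_op :: "'a measure \<Rightarrow> ('a \<Rightarrow> 'a \<Rightarrow> complex) \<Rightarrow> ('a \<Rightarrow> complex) \<Rightarrow> 'a \<Rightarrow> complex" where
  "kernel_op M K f = (\<lambda>x. LINT y|M. K x y * f y)"

definition orth_proj_kernel :: "'a measure \<Rightarrow> ('a \<Rightarrow> 'a \<Rightarrow> complex) \<Rightarrow> bool" where
  "orth_proj_kernel M K \<longleftrightarrow>
     (\<lambda>(x, y). K x y) \<in> borel_measurable (M \<Otimes>\<^sub>M M) \<and>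
     (\<forall>f. square_int M f \<longrightarrow>
        (AE x in M. integrable M (\<lambda>y. K x y * f y)) \<and>
        square_int M (kernel_op M K f) \<and>
        (AE x in M. kernel_op M K (kernel_op M K f) x = kernel_op M K f x)) \<and>
     (\<forall>f h. square_int M f \<and> square_int M h \<longrightarrow>
        (LINT x|M. cnj (kernel_op M K f x) * h x) = (LINT x|M. cnj (f x) * kernel_op M K h x))"

text \<open>Locally trace class: for every bounded Borel set B, the positive operator
  \<open>\<chi>_B \<Pi> \<chi>_B = (\<Pi>\<chi>_B)^* (\<Pi>\<chi>_B)\<close> is trace class, i.e. \<open>\<Pi>\<chi>_B\<close> is Hilbert-Schmidt.\<close>
definition locally_trace_class :: "'a::metric_space measure \<Rightarrow> ('a \<Rightarrow> 'a \<Rightarrow> complex) \<Rightarrow> bool" where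
  "locally_trace_class M K \<longleftrightarrow>
     (\<forall>B. B \<in> sets M \<and> bounded B \<longrightarrow>
        (\<integral>\<^sup>+ y. indicator B y * (\<integral>\<^sup>+ x. ennreal ((cmod (K x y))\<^sup>2) \<partial>M) \<partial>M) < \<infinity>)"

definition diagonal_convention :: "'a measure \<Rightarrow> ('a \<Rightarrow> 'a \<Rightarrow> complex) \<Rightarrow> bool" where
  "diagonal_convention M K \<longleftrightarrow>
     (AE x in M. Im (K x x) = 0 \<and> 0 \<le> Re (K x x) \<and>
        ennreal (Re (K x x)) = (\<integral>\<^sup>+ y. ennreal ((cmod (K x y))\<^sup>2) \<partial>M))"

definition Lfun :: "'a measure \<Rightarrow> ('a \<Rightarrow> 'a \<Rightarrow> complex) \<Rightarrow> ('a \<Rightarrow> real) \<Rightarrow> ennreal" where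
  "Lfun M K f = (\<integral>\<^sup>+ x. ennreal (\<bar>f x - 1\<bar> ^ 3 * Re (K x x)) \<partial>M)"

definition Vfun :: "'a measure \<Rightarrow> ('a \<Rightarrow> 'a \<Rightarrow> complex) \<Rightarrow> ('a \<Rightarrow> real) \<Rightarrow> ennreal" where
  "Vfun M K f = (\<integral>\<^sup>+ x. \<integral>\<^sup>+ y. ennreal ((f x - f y)\<^sup>2 * (cmod (K x y))\<^sup>2) \<partial>M \<partial>M)"

definition exhausting_bounded :: "'a::metric_space measure \<Rightarrow> (nat \<Rightarrow> 'a set) \<Rightarrow> bool" where
  "exhausting_bounded M En \<longleftrightarrow>
     (\<forall>n. En n \<in> sets M \<and> bounded (En n)) \<and> incseq En \<and> (\<Union>n. En n) = UNIV"

definition A3 :: "'a::metric_space measure \<Rightarrow> ('a \<Rightarrow> 'a \<Rightarrow> complex) \<Rightarrow> ('a \<Rightarrow> real) set" where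
  "A3 M K = {g. g \<in> borel_measurable M \<and>
     (\<exists>c>0. \<forall>x. c \<le> g x) \<and> (\<exists>C. \<forall>x. g x \<le> C) \<and>
     Lfun M K g < \<infinity> \<and> Vfun M K g < \<infinity> \<and>
     (\<exists>En. exhausting_bounded M En \<and>
        (\<lambda>n. \<integral>\<^sup>+ x. \<integral>\<^sup>+ y. ennreal (indicator (- En n) x * indicator (En n) y *
              (g x - 1)\<^sup>2 * (cmod (K x y))\<^sup>2) \<partial>M \<partial>M) \<longlonglongrightarrow> 0)}"

end

theory Submission
  imports Defs
begin

lemma squeeze:
  fixes u e :: "nat \<Rightarrow> ennreal"
  assumes fin: "a < \<infinity>"
  and H: "\<And>\<epsilon>. 0 < \<epsilon> \<Longrightarrow> \<epsilon> \<le> 1 \<Longrightarrow> \<exists>e. e \<longlonglongrightarrow> 0 \<and>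
      (\<forall>n. u n \<le> ennreal (1+\<epsilon>) * a + e n \<and> a \<le> ennreal (1+\<epsilon>) * u n + ennreal \<epsilon> * a + e n)"
  shows "u \<longlonglongrightarrow> a"
proof -
  obtain A where A: "a = ennreal A" "0 \<le> A" using fin
    by (metis ennreal_cases enn2real_nonneg less_irrefl top.extremum_strict)
  show ?thesis
  proof (rule order_tendstoI)
    fix y assume "y > a"
    obtain Y where Y: "Y > A" "ennreal Y \<le> y"
    proof (cases y)
      case (real r) then show ?thesis using that \<open>y > a\<close> A
        by (metis ennreal_less_iff order_refl) 
    next
      case top then show ?thesis using that[of "A+1"] by simp
    qed
    define \<epsilon> where "\<epsilon> = min 1 ((Y-A)/(2*(A+1)))"
    have ep: "0 < \<epsilon>" "\<epsilon> \<le> 1" using Y A by (auto simp: \<epsilon>_def)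
    have key: "(1+\<epsilon>)*A + (Y-A)/2 < Y"
    proof -
      have "\<epsilon>*A \<le> (Y-A)/(2*(A+1)) * A" using A by (intro mult_right_mono) (auto simp: \<epsilon>_def)
      also have "\<dots> < (Y-A)/2" using Y A by (simp add: field_simps)
      finally have "\<epsilon>*A < (Y-A)/2" .
      then show ?thesis by (simp add: algebra_simps field_simps) linarith?
    qed
    obtain e where e: "e \<longlonglongrightarrow> 0" "\<And>n. u n \<le> ennreal (1+\<epsilon>) * a + e n" using H[OF ep] by blast
    have "eventually (\<lambda>n. e n < ennreal ((Y-A)/2)) sequentially"
      using order_tendstoD(2)[OF e(1)] Y by simp
    then show "eventually (\<lambda>n. u n < y) sequentially"
    proof eventually_elim
      case (elim n)
      have "u n \<le> ennreal ((1+\<epsilon>)*A) + e n" using e(2)[of n] A ep by (simp add: ennreal_mult)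
      also have "\<dots> < ennreal ((1+\<epsilon>)*A) + ennreal ((Y-A)/2)"
        using elim by (simp add: ennreal_add_left_cancel_less)
      also have "\<dots> = ennreal ((1+\<epsilon>)*A + (Y-A)/2)" using A ep Y by (simp add: ennreal_plus)
      also have "\<dots> \<le> ennreal Y" using key by (intro ennreal_leI) simp
      finally show ?case using Y by simp
    qed
  next
    fix y assume "y < a"
    then obtain Y where Y: "y = ennreal Y" "0 \<le> Y" "Y < A" using A
      by (metis ennreal_cases ennreal_less_iff ennreal_less_top less_imp_le not_less top.not_eq_extremum
          enn2real_nonneg)
    define \<epsilon> where "\<epsilon> = min 1 ((A-Y)/(4*(A+1)))"
    have ep: "0 < \<epsilon>" "\<epsilon> \<le> 1" using Y A by (auto simp: \<epsilon>_def)
    have key: "(1+\<epsilon>)*Y + \<epsilon>*A + (A-Y)/2 < A"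
    proof -
      have "\<epsilon>*Y \<le> \<epsilon>*A" using Y ep by (intro mult_left_mono) auto
      have "\<epsilon>*A \<le> (A-Y)/(4*(A+1)) * A" using A by (intro mult_right_mono) (auto simp: \<epsilon>_def)
      also have "\<dots> < (A-Y)/4" using Y A by (simp add: field_simps)
      finally have "\<epsilon>*A < (A-Y)/4" .
      then show ?thesis using \<open>\<epsilon>*Y \<le> \<epsilon>*A\<close> by (simp add: algebra_simps field_simps) linarith?
    qed
    obtain e where e: "e \<longlonglongrightarrow> 0" "\<And>n. a \<le> ennreal (1+\<epsilon>) * u n + ennreal \<epsilon> * a + e n" using H[OF ep] by blast
    have "eventually (\<lambda>n. e n < ennreal ((A-Y)/2)) sequentially"
      using order_tendstoD(2)[OF e(1)] Y by simp
    then show "eventually (\<lambda>n. y < u n) sequentially"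
    proof eventually_elim
      case (elim n)
      show ?case
      proof (rule ccontr)
        assume "\<not> y < u n"
        then have "u n \<le> ennreal Y" using Y by simp
        have "a \<le> ennreal (1+\<epsilon>) * u n + ennreal \<epsilon> * a + e n" by (rule e(2))
        also have "\<dots> \<le> ennreal ((1+\<epsilon>)*Y) + ennreal (\<epsilon> * A) + e n"
        proof -
          have "ennreal (1+\<epsilon>) * u n \<le> ennreal (1+\<epsilon>) * ennreal Y"
            using \<open>u n \<le> ennreal Y\<close> by (rule mult_left_mono) simp
          then have "ennreal (1+\<epsilon>) * u n \<le> ennreal ((1+\<epsilon>)*Y)" using ep Y by (simp add: ennreal_mult)
          moreover have "ennreal \<epsilon> * a = ennreal (\<epsilon> * A)" using A ep by (simp add: ennreal_mult)
          ultimately show ?thesis by (intro add_mono) auto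
        qed
        also have "\<dots> < ennreal ((1+\<epsilon>)*Y) + ennreal (\<epsilon> * A) + ennreal ((A-Y)/2)"
          using elim by (simp add: ennreal_add_left_cancel_less)
        also have "\<dots> = ennreal ((1+\<epsilon>)*Y + \<epsilon>*A + (A-Y)/2)" using A ep Y by (simp add: ennreal_plus)
        also have "\<dots> \<le> ennreal A" using key by (intro ennreal_leI) simp
        finally show False using A by simp
      qed
    qed
  qed
qed

lemma young2: fixes u w eta :: real assumes "eta > 0"
  shows "(u+w)^2 \<le> (1+eta)*u^2 + (1+1/eta)*w^2"
proof -
  have "0 \<le> (eta*u - w)^2/eta" using assms by simp
  also have "(eta*u - w)^2/eta = eta*u^2 - 2*u*w + w^2/eta" using assms by (simp add: power2_eq_square field_simps)
  finally have "2*u*w \<le> eta*u^2 + w^2/eta" by simp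
  moreover have "(u+w)^2 = u^2 + 2*u*w + w^2" by (simp add: power2_eq_square algebra_simps)
  moreover have "(1+eta)*u^2 + (1+1/eta)*w^2 = u^2 + w^2 + (eta*u^2 + w^2/eta)" by (simp add: algebra_simps)
  ultimately show ?thesis by linarith
qed

lemma sq_cube: fixes t th :: real assumes "0 < th" "th \<le> 1"
  shows "t^2 \<le> th + \<bar>t\<bar>^3/th"
proof (cases "t^2 \<le> th")
  case True then show ?thesis using assms by (simp add: add_increasing2)
next
  case False
  have "th \<le> \<bar>t\<bar>"
  proof (rule ccontr)
    assume "\<not> th \<le> \<bar>t\<bar>"
    then have "\<bar>t\<bar>*\<bar>t\<bar> \<le> th * 1" using assms by (intro mult_mono) auto
    then show False using False by (simp add: power2_eq_square abs_mult_self_eq)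
  qed
  then have "th * t^2 \<le> \<bar>t\<bar> * t^2" by (simp add: mult_right_mono)
  also have "\<bar>t\<bar> * t^2 = \<bar>t\<bar>^3" by (simp add: power2_eq_square power3_eq_cube abs_mult_self_eq)
  finally have "t^2 \<le> \<bar>t\<bar>^3/th" using assms by (simp add: field_simps)
  then show ?thesis using assms by simp
qed

lemma cube_bd: fixes b d dl :: real assumes "0 \<le> b" "0 \<le> d" "0 < dl" "dl \<le> 1"
  shows "(b+d)^3 \<le> (1+6*dl)*b^3 + (1+6/dl^2)*d^3"
proof -
  have 1: "b^2*d \<le> dl*b^3 + d^3/dl^2"
  proof (cases "d \<le> dl*b")
    case True
    then have "b^2*d \<le> b^2*(dl*b)" using assms by (simp add: mult_left_mono)
    also have "\<dots> = dl*b^3" by (simp add: power2_eq_square power3_eq_cube)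
    finally show ?thesis using assms by (simp add: add_increasing2)
  next
    case False
    then have "dl*b \<le> d" by simp
    then have "(dl*b)^2 * d \<le> d^2*d" using assms by (intro mult_right_mono power_mono) auto
    then have "dl^2 * (b^2*d) \<le> d^3" by (simp add: power2_eq_square power3_eq_cube algebra_simps)
    then have "b^2*d \<le> d^3/dl^2" using assms by (simp add: pos_le_divide_eq mult.commute)
    then show ?thesis using assms by (simp add: add_increasing)
  qed
  have 2: "b*d^2 \<le> dl*b^3 + d^3/dl^2"
  proof (cases "d \<le> dl*b")
    case True
    then have "b*d^2 \<le> b*(dl*b)^2" using assms by (intro mult_left_mono power_mono) auto
    also have "\<dots> = dl*(dl*b^3)" by (simp add: power2_eq_square power3_eq_cube)
    also have "\<dots> \<le> 1*(dl*b^3)" using assms by (intro mult_right_mono) auto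
    finally show ?thesis using assms by (simp add: add_increasing2)
  next
    case False
    then have "dl*b \<le> d" by simp
    then have "dl*b*d^2 \<le> d*d^2" using assms by (intro mult_right_mono) auto
    then have "dl*(b*d^2) \<le> d^3" by (simp add: power2_eq_square power3_eq_cube algebra_simps)
    moreover have "dl*(dl*(b*d^2)) \<le> dl*(b*d^2)" using assms
      by (intro mult_left_le_one_le) auto
    ultimately have "dl*(dl*(b*d^2)) \<le> d^3" by linarith
    then have "dl^2*(b*d^2) \<le> d^3" by (simp add: power2_eq_square algebra_simps)
    then have "b*d^2 \<le> d^3/dl^2" using assms by (simp add: pos_le_divide_eq mult.commute)
    then show ?thesis using assms by (simp add: add_increasing)
  qed
  have "(b+d)^3 = b^3 + 3*(b^2*d) + 3*(b*d^2) + d^3" by (simp add: power2_eq_square power3_eq_cube algebra_simps)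
  also have "\<dots> \<le> b^3 + 3*(dl*b^3 + d^3/dl^2) + 3*(dl*b^3 + d^3/dl^2) + d^3"
    using 1 2 by (intro add_mono mult_left_mono) auto
  also have "\<dots> = (1+6*dl)*b^3 + (1+6/dl^2)*d^3"
    by (simp add: algebra_simps)
  finally show ?thesis .
qed

lemma V_pt: fixes p q hx hy G e :: real
  assumes "0<p" "p\<le>G" "0<q" "q\<le>G" "0<e" "e\<le>1"
  shows "(hx*p - hy*q)^2 \<le> (1+e)*(p-q)^2 + (2*(1+2/e)*G^2)*(hx-hy)^2
            + (2*(1+2/e)*G^2/(e^2/(4*(e+2))))*\<bar>hx-1\<bar>^3"
    and "(p-q)^2 \<le> (1+e)*(hx*p - hy*q)^2 + e*(p-q)^2 + (2*(1+2/e)*G^2)*(hx-hy)^2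
            + (2*(1+2/e)*G^2/(e^2/(4*(e+2))))*\<bar>hx-1\<bar>^3"
proof -
  define th where "th = e^2/(4*(e+2))"
  define d where "d = (hx-hy)*q + (hx-1)*(p-q)"
  define a where "a = hx*p - hy*q"
  define b where "b = p - q"
  define c where "c = 1 + 2/e"
  have ad: "a = b + d" by (simp add: a_def b_def d_def algebra_simps)
  have th0: "0 < th" using assms by (simp add: th_def)
  have th1: "th \<le> 1"
  proof -
    have "e^2 \<le> 1" using assms by (simp add: power_le_one)
    then have "e^2 \<le> 4*(e+2)" using assms by (simp add: algebra_simps)
    then show ?thesis using assms by (simp add: th_def)
  qed
  have cth: "c * (2*th) = e/2"
  proof -
    have ce: "c*e = e+2" using assms by (simp add: c_def field_simps)
    have "c * (2*th) = (c*e) * (2*e) / (4*(e+2))" by (simp add: th_def power2_eq_square)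
    also have "\<dots> = e/2" unfolding ce using assms by (simp add: field_simps)
    finally show ?thesis .
  qed
  have c0: "c > 0" using assms by (simp add: c_def add_pos_nonneg)
  have b2: "b^2 \<le> G^2"
  proof -
    have "\<bar>b\<bar> \<le> G" using assms by (simp add: b_def abs_le_iff)
    then show ?thesis by (metis abs_ge_zero power2_abs power_mono)
  qed
  have q2: "q^2 \<le> G^2" using assms by (intro power_mono) auto
  have "d^2 \<le> (1+1)*((hx-hy)*q)^2 + (1+1/1)*((hx-1)*(p-q))^2"
    unfolding d_def by (rule young2) simp
  also have "((hx-hy)*q)^2 \<le> G^2*(hx-hy)^2"
    using q2 by (simp add: power_mult_distrib mult_right_mono mult.commute)
  also have "((hx-1)*(p-q))^2 = (hx-1)^2 * b^2" by (simp add: b_def power_mult_distrib)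
  also have "(hx-1)^2 * b^2 \<le> (th + \<bar>hx-1\<bar>^3/th) * b^2"
    using sq_cube[OF th0 th1] by (intro mult_right_mono) auto
  also have "(th + \<bar>hx-1\<bar>^3/th) * b^2 \<le> th*b^2 + G^2/th*\<bar>hx-1\<bar>^3"
  proof -
    have "\<bar>hx-1\<bar>^3/th * b^2 \<le> \<bar>hx-1\<bar>^3/th * G^2" using b2 th0 by (intro mult_left_mono) auto
    then show ?thesis by (simp add: algebra_simps)
  qed
  finally have d2: "d^2 \<le> 2*G^2*(hx-hy)^2 + 2*th*b^2 + 2*G^2/th*\<bar>hx-1\<bar>^3" by simp
  have cd: "c*d^2 \<le> e/2*b^2 + (2*c*G^2)*(hx-hy)^2 + (2*c*G^2/th)*\<bar>hx-1\<bar>^3"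
  proof -
    have "c*d^2 \<le> c*(2*G^2*(hx-hy)^2 + 2*th*b^2 + 2*G^2/th*\<bar>hx-1\<bar>^3)"
      using d2 c0 by (intro mult_left_mono) auto
    also have "\<dots> = (c*(2*th))*b^2 + (2*c*G^2)*(hx-hy)^2 + (2*c*G^2/th)*\<bar>hx-1\<bar>^3"
      by (simp add: algebra_simps)
    finally show ?thesis using cth by simp
  qed
  have "a^2 \<le> (1+e/2)*b^2 + (1+1/(e/2))*d^2" unfolding ad by (rule young2) (use assms in simp)
  also have "(1+1/(e/2)) = c" by (simp add: c_def)
  finally have "a^2 \<le> (1+e/2)*b^2 + c*d^2" .
  with cd have "a^2 \<le> (1+e)*b^2 + (2*c*G^2)*(hx-hy)^2 + (2*c*G^2/th)*\<bar>hx-1\<bar>^3"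
    by (simp add: algebra_simps)
  then show "(hx*p - hy*q)^2 \<le> (1+e)*(p-q)^2 + (2*(1+2/e)*G^2)*(hx-hy)^2
            + (2*(1+2/e)*G^2/(e^2/(4*(e+2))))*\<bar>hx-1\<bar>^3"
    by (simp add: a_def b_def c_def th_def)
  have "b = a + (-d)" using ad by simp
  then have "b^2 = (a + (-d))^2" by simp
  also have "\<dots> \<le> (1+e/2)*a^2 + (1+1/(e/2))*(-d)^2" by (rule young2) (use assms in simp)
  also have "(1+1/(e/2)) = c" by (simp add: c_def)
  finally have "b^2 \<le> (1+e/2)*a^2 + c*d^2" by simp
  moreover have "(1+e/2)*a^2 \<le> (1+e)*a^2" using assms by (intro mult_right_mono) auto
  ultimately have "b^2 \<le> (1+e)*a^2 + e/2*b^2 + (2*c*G^2)*(hx-hy)^2 + (2*c*G^2/th)*\<bar>hx-1\<bar>^3"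
    using cd by linarith
  moreover have "e/2*b^2 \<le> e*b^2" using assms by (intro mult_right_mono) auto
  ultimately have "b^2 \<le> (1+e)*a^2 + e*b^2 + (2*c*G^2)*(hx-hy)^2 + (2*c*G^2/th)*\<bar>hx-1\<bar>^3"
    by linarith
  then show "(p-q)^2 \<le> (1+e)*(hx*p - hy*q)^2 + e*(p-q)^2 + (2*(1+2/e)*G^2)*(hx-hy)^2
            + (2*(1+2/e)*G^2/(e^2/(4*(e+2))))*\<bar>hx-1\<bar>^3"
    by (simp add: a_def b_def c_def th_def)
qed


lemma space_borelM: "sets M = sets borel \<Longrightarrow> space M = UNIV"
  using sets_eq_imp_space_eq by fastforce

lemma K_meas:
  assumes "orth_proj_kernel M K"
  shows "(\<lambda>(x,y). K x y) \<in> borel_measurable (M \<Otimes>\<^sub>M M)"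
  using assms unfolding orth_proj_kernel_def by blast

lemma Kdiag_meas:
  assumes "orth_proj_kernel M K"
  shows "(\<lambda>x. K x x) \<in> borel_measurable M"
proof -
  have "(\<lambda>x. (x,x)) \<in> measurable M (M \<Otimes>\<^sub>M M)" by measurable
  from measurable_comp[OF this K_meas[OF assms]] show ?thesis by (simp add: o_def)
qed

lemma Kx_meas:
  assumes "orth_proj_kernel M K" "sets M = sets borel"
  shows "K x \<in> borel_measurable M"
proof -
  have "x \<in> space M" using space_borelM[OF assms(2)] by simp
  from measurable_Pair2[OF K_meas[OF assms(1)] this] show ?thesis by simp
qed

lemma L_ineq:
  fixes f1 f2 r :: "'a \<Rightarrow> real"
  assumes K: "orth_proj_kernel M K"
    and m: "f1 \<in> borel_measurable M" "f2 \<in> borel_measurable M" "r \<in> borel_measurable M"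
    and pt: "\<And>x. \<bar>f1 x - 1\<bar>^3 \<le> \<alpha> * \<bar>f2 x - 1\<bar>^3 + \<gamma> * \<bar>r x - 1\<bar>^3"
    and ag: "0 \<le> \<alpha>" "0 \<le> \<gamma>"
  shows "Lfun M K f1 \<le> ennreal \<alpha> * Lfun M K f2 + ennreal \<gamma> * Lfun M K r"
proof -
  note [measurable] = m Kdiag_meas[OF K]
  have "Lfun M K f1 \<le> (\<integral>\<^sup>+ x. ennreal \<alpha> * ennreal (\<bar>f2 x - 1\<bar> ^ 3 * Re (K x x))
          + ennreal \<gamma> * ennreal (\<bar>r x - 1\<bar> ^ 3 * Re (K x x)) \<partial>M)"
    unfolding Lfun_def
  proof (intro nn_integral_mono)
    fix x
    show "ennreal (\<bar>f1 x - 1\<bar> ^ 3 * Re (K x x)) \<le> ennreal \<alpha> * ennreal (\<bar>f2 x - 1\<bar> ^ 3 * Re (K x x))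
          + ennreal \<gamma> * ennreal (\<bar>r x - 1\<bar> ^ 3 * Re (K x x))"
    proof (cases "Re (K x x) \<ge> 0")
      case True
      have "\<bar>f1 x - 1\<bar> ^ 3 * Re (K x x) \<le> (\<alpha> * \<bar>f2 x - 1\<bar>^3 + \<gamma> * \<bar>r x - 1\<bar>^3) * Re (K x x)"
        using pt[of x] True by (rule mult_right_mono)
      also have "\<dots> = \<alpha> * (\<bar>f2 x - 1\<bar>^3 * Re (K x x)) + \<gamma> * (\<bar>r x - 1\<bar>^3 * Re (K x x))"
        by (simp add: algebra_simps)
      finally have "ennreal (\<bar>f1 x - 1\<bar> ^ 3 * Re (K x x)) \<le> ennreal (\<alpha> * (\<bar>f2 x - 1\<bar>^3 * Re (K x x)) + \<gamma> * (\<bar>r x - 1\<bar>^3 * Re (K x x)))"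
        by (rule ennreal_leI)
      also have "\<dots> = ennreal \<alpha> * ennreal (\<bar>f2 x - 1\<bar> ^ 3 * Re (K x x))
          + ennreal \<gamma> * ennreal (\<bar>r x - 1\<bar> ^ 3 * Re (K x x))"
        using True ag by (simp add: ennreal_plus ennreal_mult)
      finally show ?thesis .
    next
      case False
      then have "\<bar>f1 x - 1\<bar> ^ 3 * Re (K x x) \<le> 0" by (simp add: mult_nonneg_nonpos)
      then show ?thesis by (simp add: ennreal_neg)
    qed
  qed
  also have "\<dots> = ennreal \<alpha> * Lfun M K f2 + ennreal \<gamma> * Lfun M K r"
    unfolding Lfun_def by (simp add: nn_integral_add nn_integral_cmult)
  finally show ?thesis .
qed

lemma V_ineq:
  fixes f1 f2 f3 r :: "'a::topological_space \<Rightarrow> real"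
  assumes K: "orth_proj_kernel M K" and sb: "sets M = sets borel" and sf: "sigma_finite_measure M"
    and dc: "diagonal_convention M K"
    and m: "f1 \<in> borel_measurable M" "f2 \<in> borel_measurable M" "f3 \<in> borel_measurable M"
       "r \<in> borel_measurable M"
    and pt: "\<And>x y. (f1 x - f1 y)^2 \<le> \<alpha> * (f2 x - f2 y)^2 + \<beta> * (f3 x - f3 y)^2
        + \<gamma> * (r x - r y)^2 + \<delta> * \<bar>r x - 1\<bar>^3"
    and co: "0 \<le> \<alpha>" "0 \<le> \<beta>" "0 \<le> \<gamma>" "0 \<le> \<delta>"
  shows "Vfun M K f1 \<le> ennreal \<alpha> * Vfun M K f2 + ennreal \<beta> * Vfun M K f3
     + ennreal \<gamma> * Vfun M K r + ennreal \<delta> * Lfun M K r"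
proof -
  interpret sigma_finite_measure M by (rule sf)
  note [measurable] = m Kdiag_meas[OF K] K_meas[OF K]
  have Kx: "\<And>x. K x \<in> borel_measurable M" using Kx_meas[OF K sb] .
  define P :: "('a \<Rightarrow> real) \<Rightarrow> 'a \<Rightarrow> 'a \<Rightarrow> ennreal"
    where "P f x y = ennreal ((f x - f y)^2 * (cmod (K x y))^2)" for f x y
  define k where "k x y = ennreal ((cmod (K x y))^2)" for x y
  have sp: "\<And>x. x \<in> space M" using space_borelM[OF sb] by simp
  have Pprod: "\<And>f. f \<in> borel_measurable M \<Longrightarrow> (\<lambda>(x,y). P f x y) \<in> borel_measurable (M \<Otimes>\<^sub>M M)"
  proof -
    fix f :: "'a \<Rightarrow> real" assume [measurable]: "f \<in> borel_measurable M"
    show "(\<lambda>(x,y). P f x y) \<in> borel_measurable (M \<Otimes>\<^sub>M M)" unfolding P_def by measurable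
  qed
  have kprod: "(\<lambda>(x,y). k x y) \<in> borel_measurable (M \<Otimes>\<^sub>M M)" unfolding k_def by measurable
  have Pm: "\<And>f x. f \<in> borel_measurable M \<Longrightarrow> P f x \<in> borel_measurable M"
    using measurable_Pair2[OF Pprod sp] by simp
  have km: "\<And>x. k x \<in> borel_measurable M" using measurable_Pair2[OF kprod sp] by simp
  have Pm2: "\<And>f. f \<in> borel_measurable M \<Longrightarrow> (\<lambda>x. \<integral>\<^sup>+ y. P f x y \<partial>M) \<in> borel_measurable M"
    using borel_measurable_nn_integral[OF Pprod] by simp
  have km2[measurable]: "(\<lambda>x. \<integral>\<^sup>+ y. k x y \<partial>M) \<in> borel_measurable M"
    using borel_measurable_nn_integral[OF kprod] by simp
  have VP: "\<And>f. Vfun M K f = (\<integral>\<^sup>+ x. \<integral>\<^sup>+ y. P f x y \<partial>M \<partial>M)"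
    unfolding Vfun_def P_def ..
  have "Vfun M K f1 \<le> (\<integral>\<^sup>+ x. \<integral>\<^sup>+ y. ennreal \<alpha> * P f2 x y + ennreal \<beta> * P f3 x y
      + ennreal \<gamma> * P r x y + ennreal (\<delta> * \<bar>r x - 1\<bar>^3) * k x y \<partial>M \<partial>M)"
    unfolding VP
  proof (intro nn_integral_mono)
    fix x y
    let ?k = "(cmod (K x y))^2"
    have "(f1 x - f1 y)^2 * ?k \<le> (\<alpha> * (f2 x - f2 y)^2 + \<beta> * (f3 x - f3 y)^2
        + \<gamma> * (r x - r y)^2 + \<delta> * \<bar>r x - 1\<bar>^3) * ?k"
      using pt[of x y] by (rule mult_right_mono) simp
    also have "\<dots> = \<alpha> * ((f2 x - f2 y)^2 * ?k) + \<beta> * ((f3 x - f3 y)^2 * ?k)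
        + \<gamma> * ((r x - r y)^2 * ?k) + (\<delta> * \<bar>r x - 1\<bar>^3) * ?k"
      by (simp add: algebra_simps)
    finally have "P f1 x y \<le> ennreal (\<alpha> * ((f2 x - f2 y)^2 * ?k) + \<beta> * ((f3 x - f3 y)^2 * ?k)
        + \<gamma> * ((r x - r y)^2 * ?k) + (\<delta> * \<bar>r x - 1\<bar>^3) * ?k)"
      unfolding P_def by (rule ennreal_leI)
    also have "\<dots> = ennreal \<alpha> * P f2 x y + ennreal \<beta> * P f3 x y
      + ennreal \<gamma> * P r x y + ennreal (\<delta> * \<bar>r x - 1\<bar>^3) * k x y"
      using co by (simp add: P_def k_def ennreal_plus ennreal_mult add_nonneg_nonneg)
    finally show "P f1 x y \<le> ennreal \<alpha> * P f2 x y + ennreal \<beta> * P f3 x y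
      + ennreal \<gamma> * P r x y + ennreal (\<delta> * \<bar>r x - 1\<bar>^3) * k x y" .
  qed
  also have "\<dots> = (\<integral>\<^sup>+ x. ennreal \<alpha> * (\<integral>\<^sup>+ y. P f2 x y \<partial>M) + ennreal \<beta> * (\<integral>\<^sup>+ y. P f3 x y \<partial>M)
      + ennreal \<gamma> * (\<integral>\<^sup>+ y. P r x y \<partial>M) + ennreal (\<delta> * \<bar>r x - 1\<bar>^3) * (\<integral>\<^sup>+ y. k x y \<partial>M) \<partial>M)"
  proof (rule nn_integral_cong)
    fix x
    note [measurable] = Pm[OF m(2), of x] Pm[OF m(3), of x] Pm[OF m(4), of x] km[of x]
    let ?A = "\<lambda>y. ennreal \<alpha> * P f2 x y" and ?B = "\<lambda>y. ennreal \<beta> * P f3 x y"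
      and ?C = "\<lambda>y. ennreal \<gamma> * P r x y" and ?D = "\<lambda>y. ennreal (\<delta> * \<bar>r x - 1\<bar>^3) * k x y"
    have "(\<integral>\<^sup>+ y. ?A y + ?B y + ?C y + ?D y \<partial>M) = (\<integral>\<^sup>+ y. ?A y + ?B y + ?C y \<partial>M) + (\<integral>\<^sup>+ y. ?D y \<partial>M)"
      by (rule nn_integral_add) measurable
    also have "(\<integral>\<^sup>+ y. ?A y + ?B y + ?C y \<partial>M) = (\<integral>\<^sup>+ y. ?A y + ?B y \<partial>M) + (\<integral>\<^sup>+ y. ?C y \<partial>M)"
      by (rule nn_integral_add) measurable
    also have "(\<integral>\<^sup>+ y. ?A y + ?B y \<partial>M) = (\<integral>\<^sup>+ y. ?A y \<partial>M) + (\<integral>\<^sup>+ y. ?B y \<partial>M)"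
      by (rule nn_integral_add) measurable
    finally show "(\<integral>\<^sup>+ y. ?A y + ?B y + ?C y + ?D y \<partial>M) = ennreal \<alpha> * (\<integral>\<^sup>+ y. P f2 x y \<partial>M) + ennreal \<beta> * (\<integral>\<^sup>+ y. P f3 x y \<partial>M)
      + ennreal \<gamma> * (\<integral>\<^sup>+ y. P r x y \<partial>M) + ennreal (\<delta> * \<bar>r x - 1\<bar>^3) * (\<integral>\<^sup>+ y. k x y \<partial>M)"
      by (simp add: nn_integral_cmult)
  qed
  also have "\<dots> = ennreal \<alpha> * Vfun M K f2 + ennreal \<beta> * Vfun M K f3
      + ennreal \<gamma> * Vfun M K r + (\<integral>\<^sup>+ x. ennreal (\<delta> * \<bar>r x - 1\<bar>^3) * (\<integral>\<^sup>+ y. k x y \<partial>M) \<partial>M)"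
  proof -
    note [measurable] = Pm2[OF m(2)] Pm2[OF m(3)] Pm2[OF m(4)]
    let ?A = "\<lambda>x. ennreal \<alpha> * (\<integral>\<^sup>+ y. P f2 x y \<partial>M)" and ?B = "\<lambda>x. ennreal \<beta> * (\<integral>\<^sup>+ y. P f3 x y \<partial>M)"
      and ?C = "\<lambda>x. ennreal \<gamma> * (\<integral>\<^sup>+ y. P r x y \<partial>M)" and ?D = "\<lambda>x. ennreal (\<delta> * \<bar>r x - 1\<bar>^3) * (\<integral>\<^sup>+ y. k x y \<partial>M)"
    have "(\<integral>\<^sup>+ x. ?A x + ?B x + ?C x + ?D x \<partial>M) = (\<integral>\<^sup>+ x. ?A x + ?B x + ?C x \<partial>M) + (\<integral>\<^sup>+ x. ?D x \<partial>M)"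
      by (rule nn_integral_add) measurable
    also have "(\<integral>\<^sup>+ x. ?A x + ?B x + ?C x \<partial>M) = (\<integral>\<^sup>+ x. ?A x + ?B x \<partial>M) + (\<integral>\<^sup>+ x. ?C x \<partial>M)"
      by (rule nn_integral_add) measurable
    also have "(\<integral>\<^sup>+ x. ?A x + ?B x \<partial>M) = (\<integral>\<^sup>+ x. ?A x \<partial>M) + (\<integral>\<^sup>+ x. ?B x \<partial>M)"
      by (rule nn_integral_add) measurable
    finally show ?thesis
      using Pm2[OF m(2)] Pm2[OF m(3)] Pm2[OF m(4)] by (simp add: nn_integral_cmult VP)
  qed
  also have "(\<integral>\<^sup>+ x. ennreal (\<delta> * \<bar>r x - 1\<bar>^3) * (\<integral>\<^sup>+ y. k x y \<partial>M) \<partial>M)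
      = (\<integral>\<^sup>+ x. ennreal \<delta> * ennreal (\<bar>r x - 1\<bar> ^ 3 * Re (K x x)) \<partial>M)"
  proof (rule nn_integral_cong_AE)
    show "AE x in M. ennreal (\<delta> * \<bar>r x - 1\<bar>^3) * (\<integral>\<^sup>+ y. k x y \<partial>M)
        = ennreal \<delta> * ennreal (\<bar>r x - 1\<bar> ^ 3 * Re (K x x))"
      using dc unfolding diagonal_convention_def
    proof eventually_elim
      case (elim x)
      then show ?case using co by (simp add: k_def ennreal_mult mult.assoc)
    qed
  qed
  also have "\<dots> = ennreal \<delta> * Lfun M K r" unfolding Lfun_def by (simp add: nn_integral_cmult)
  finally show ?thesis .
qed


lemma L_pt: fixes p hx G e :: real
  assumes "0<p" "p\<le>G" "0<e" "e\<le>1"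
  shows "\<bar>hx*p - 1\<bar>^3 \<le> (1+e)*\<bar>p-1\<bar>^3 + ((1+6/(e/6)^2)*G^3)*\<bar>hx-1\<bar>^3"
    and "\<bar>p - 1\<bar>^3 \<le> (1+e)*\<bar>hx*p-1\<bar>^3 + ((1+6/(e/6)^2)*G^3)*\<bar>hx-1\<bar>^3"
proof -
  define d where "d = \<bar>hx*p - p\<bar>"
  have "hx*p - p = p * (hx - 1)" by (simp add: algebra_simps)
  then have d: "d = p * \<bar>hx - 1\<bar>" using assms by (simp add: d_def abs_mult)
  have d3: "d^3 \<le> G^3 * \<bar>hx-1\<bar>^3"
  proof -
    have "d \<le> G*\<bar>hx-1\<bar>" unfolding d using assms by (intro mult_right_mono) auto
    then have "d^3 \<le> (G*\<bar>hx-1\<bar>)^3" by (intro power_mono) (auto simp: d_def)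
    then show ?thesis by (simp add: power_mult_distrib)
  qed
  have dl: "0 < e/6" "e/6 \<le> 1" using assms by auto
  have c0: "0 \<le> 1+6/(e/6)^2" by (simp add: add_nonneg_nonneg)
  have cd: "(1+6/(e/6)^2)*d^3 \<le> ((1+6/(e/6)^2)*G^3)*\<bar>hx-1\<bar>^3"
    using mult_left_mono[OF d3 c0] by (simp add: mult.assoc)
  have "\<bar>hx*p - 1\<bar> \<le> \<bar>p-1\<bar> + d" unfolding d_def by (rule order_trans[OF _ abs_triangle_ineq]) simp
  then have "\<bar>hx*p - 1\<bar>^3 \<le> (\<bar>p-1\<bar> + d)^3" by (intro power_mono) auto
  also have "\<dots> \<le> (1+6*(e/6))*\<bar>p-1\<bar>^3 + (1+6/(e/6)^2)*d^3"
    using cube_bd[OF _ _ dl] by (simp add: d_def)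
  finally show "\<bar>hx*p - 1\<bar>^3 \<le> (1+e)*\<bar>p-1\<bar>^3 + ((1+6/(e/6)^2)*G^3)*\<bar>hx-1\<bar>^3"
    using cd by simp
  have "\<bar>p - 1\<bar> \<le> \<bar>hx*p-1\<bar> + d" unfolding d_def
    using abs_triangle_ineq4[of "hx*p-1" "hx*p-p"] by simp
  then have "\<bar>p - 1\<bar>^3 \<le> (\<bar>hx*p-1\<bar> + d)^3" by (intro power_mono) auto
  also have "\<dots> \<le> (1+6*(e/6))*\<bar>hx*p-1\<bar>^3 + (1+6/(e/6)^2)*d^3"
    using cube_bd[OF _ _ dl] by (simp add: d_def)
  finally show "\<bar>p - 1\<bar>^3 \<le> (1+e)*\<bar>hx*p-1\<bar>^3 + ((1+6/(e/6)^2)*G^3)*\<bar>hx-1\<bar>^3"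
    using cd by simp
qed

theorem lemma7p7:
  fixes M :: "'a::polish_space measure"
    and K :: "'a \<Rightarrow> 'a \<Rightarrow> complex"
    and gs :: "nat \<Rightarrow> 'a \<Rightarrow> real"
    and g :: "'a \<Rightarrow> real"
  assumes "locally_compact_space (euclidean :: 'a topology)"
    and "sets M = sets borel"
    and "sigma_finite_measure M"
    and "orth_proj_kernel M K"
    and "locally_trace_class M K"
    and "diagonal_convention M K"
    and "\<And>n. gs n \<in> A3 M K"
    and "g \<in> A3 M K"
    and "\<exists>C. \<forall>n x. \<bar>gs n x\<bar> \<le> C"
    and "(\<lambda>n. Lfun M K (\<lambda>x. gs n x / g x)) \<longlonglongrightarrow> 0"
    and "(\<lambda>n. Vfun M K (\<lambda>x. gs n x / g x)) \<longlonglongrightarrow> 0"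
  shows "(\<lambda>n. Lfun M K (gs n)) \<longlonglongrightarrow> Lfun M K g \<and>
         (\<lambda>n. Vfun M K (gs n)) \<longlonglongrightarrow> Vfun M K g"
proof -
  note sb = assms(2) and sf = assms(3) and K = assms(4) and dc = assms(6)
  have gm[measurable]: "g \<in> borel_measurable M" using assms(8) by (simp add: A3_def)
  have gsm[measurable]: "\<And>n. gs n \<in> borel_measurable M" using assms(7) by (simp add: A3_def)
  obtain c where c: "c > 0" "\<And>x. c \<le> g x" using assms(8) by (auto simp: A3_def)
  obtain G where G: "\<And>x. g x \<le> G" using assms(8) by (auto simp: A3_def)
  have gpos: "\<And>x. 0 < g x" using c by (metis order_less_le_trans)
  have Lg: "Lfun M K g < \<infinity>" and Vg: "Vfun M K g < \<infinity>" using assms(8) by (auto simp: A3_def)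
  define h where "h n x = gs n x / g x" for n x
  have hm: "\<And>n. h n \<in> borel_measurable M" unfolding h_def by measurable
  have gsh: "\<And>n x. gs n x = h n x * g x"
  proof -
    fix n x have "g x \<noteq> 0" using gpos[of x] by simp
    then show "gs n x = h n x * g x" by (simp add: h_def)
  qed
  have hL: "(\<lambda>n. Lfun M K (h n)) \<longlonglongrightarrow> 0" using assms(10) by (simp add: h_def[abs_def])
  have hV: "(\<lambda>n. Vfun M K (h n)) \<longlonglongrightarrow> 0" using assms(11) by (simp add: h_def[abs_def])
  have part1: "(\<lambda>n. Lfun M K (gs n)) \<longlonglongrightarrow> Lfun M K g"
  proof (rule squeeze[OF Lg])
    fix e :: real assume e: "0 < e" "e \<le> 1"
    define C where "C = (1+6/(e/6)^2)*G^3"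
    have C0: "0 \<le> C" unfolding C_def using G gpos
      by (intro mult_nonneg_nonneg add_nonneg_nonneg zero_le_power) (auto intro: less_imp_le order_less_le_trans)
    have "(\<lambda>n. ennreal C * Lfun M K (h n)) \<longlonglongrightarrow> ennreal C * 0"
      by (rule ennreal_tendsto_cmult[OF _ hL]) simp
    then have lim: "(\<lambda>n. ennreal C * Lfun M K (h n)) \<longlonglongrightarrow> 0" by simp
    show "\<exists>e'. e' \<longlonglongrightarrow> 0 \<and> (\<forall>n. Lfun M K (gs n) \<le> ennreal (1+e) * Lfun M K g + e' n \<and>
        Lfun M K g \<le> ennreal (1+e) * Lfun M K (gs n) + ennreal e * Lfun M K g + e' n)"
    proof (intro exI conjI allI)
      show "(\<lambda>n. ennreal C * Lfun M K (h n)) \<longlonglongrightarrow> 0" by (rule lim)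
      fix n
      show "Lfun M K (gs n) \<le> ennreal (1+e) * Lfun M K g + ennreal C * Lfun M K (h n)"
        using e C0
        by (intro L_ineq[OF K gsm gm hm]) (auto simp: gsh C_def intro: L_pt(1)[OF gpos G e])
      have "Lfun M K g \<le> ennreal (1+e) * Lfun M K (gs n) + ennreal C * Lfun M K (h n)"
        using e C0
        by (intro L_ineq[OF K gm gsm hm]) (auto simp: gsh C_def intro: L_pt(2)[OF gpos G e])
      also have "\<dots> \<le> ennreal (1+e) * Lfun M K (gs n) + ennreal e * Lfun M K g + ennreal C * Lfun M K (h n)"
        by (simp add: add_mono)
      finally show "Lfun M K g \<le> ennreal (1+e) * Lfun M K (gs n) + ennreal e * Lfun M K g + ennreal C * Lfun M K (h n)" .
    qed
  qed
  have part2: "(\<lambda>n. Vfun M K (gs n)) \<longlonglongrightarrow> Vfun M K g"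
  proof (rule squeeze[OF Vg])
    fix e :: real assume e: "0 < e" "e \<le> 1"
    define A where "A = 2*(1+2/e)*G^2"
    define B where "B = 2*(1+2/e)*G^2/(e^2/(4*(e+2)))"
    have A0: "0 \<le> A" unfolding A_def using e by (simp add: add_nonneg_nonneg)
    have B0: "0 \<le> B" unfolding B_def using e by (simp add: add_nonneg_nonneg)
    have "(\<lambda>n. ennreal A * Vfun M K (h n) + ennreal B * Lfun M K (h n)) \<longlonglongrightarrow> ennreal A * 0 + ennreal B * 0"
      by (intro tendsto_add ennreal_tendsto_cmult hL hV) simp_all
    then have lim: "(\<lambda>n. ennreal A * Vfun M K (h n) + ennreal B * Lfun M K (h n)) \<longlonglongrightarrow> 0" by simp
    show "\<exists>e'. e' \<longlonglongrightarrow> 0 \<and> (\<forall>n. Vfun M K (gs n) \<le> ennreal (1+e) * Vfun M K g + e' n \<and>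
        Vfun M K g \<le> ennreal (1+e) * Vfun M K (gs n) + ennreal e * Vfun M K g + e' n)"
    proof (intro exI conjI allI)
      show "(\<lambda>n. ennreal A * Vfun M K (h n) + ennreal B * Lfun M K (h n)) \<longlonglongrightarrow> 0" by (rule lim)
      fix n
      have "Vfun M K (gs n) \<le> ennreal (1+e) * Vfun M K g + ennreal 0 * Vfun M K g
         + ennreal A * Vfun M K (h n) + ennreal B * Lfun M K (h n)"
        using e A0 B0
      proof (intro V_ineq[OF K sb sf dc gsm gm gm hm])
        fix x y
        show "(gs n x - gs n y)^2 \<le> (1+e)*(g x - g y)^2 + 0*(g x - g y)^2 + A*(h n x - h n y)^2 + B*\<bar>h n x - 1\<bar>^3"
          using V_pt(1)[where hx="h n x" and hy="h n y", OF gpos[of x] G[of x] gpos[of y] G[of y] e] unfolding gsh A_def B_def by simp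
      qed (use e A0 B0 in auto)
      then show "Vfun M K (gs n) \<le> ennreal (1+e) * Vfun M K g + (ennreal A * Vfun M K (h n) + ennreal B * Lfun M K (h n))"
        by (simp add: add.assoc)
      have "Vfun M K g \<le> ennreal (1+e) * Vfun M K (gs n) + ennreal e * Vfun M K g
         + ennreal A * Vfun M K (h n) + ennreal B * Lfun M K (h n)"
        using e A0 B0
      proof (intro V_ineq[OF K sb sf dc gm gsm gm hm])
        fix x y
        show "(g x - g y)^2 \<le> (1+e)*(gs n x - gs n y)^2 + e*(g x - g y)^2 + A*(h n x - h n y)^2 + B*\<bar>h n x - 1\<bar>^3"
          using V_pt(2)[where hx="h n x" and hy="h n y", OF gpos[of x] G[of x] gpos[of y] G[of y] e] unfolding gsh A_def B_def by simp
      qed (use e A0 B0 in auto)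
      then show "Vfun M K g \<le> ennreal (1+e) * Vfun M K (gs n) + ennreal e * Vfun M K g + (ennreal A * Vfun M K (h n) + ennreal B * Lfun M K (h n))"
        by (simp add: add.assoc)
    qed
  qed
  show ?thesis using part1 part2 by blast
qed

end
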